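(* Let $T_{13}=\mathbf{e}^1_1\otimes(\mathbf{e}^2_1\otimes\mathbf{e}^3_1+\mathbf{e}^2_2\otimes\mathbf{e}^3_3)+\mathbf{e}^1_2\otimes(\mathbf{e}^2_1\otimes\mathbf{e}^3_2+\mathbf{e}^2_3\otimes\mathbf{e}^3_3)\in\mathbb{C}^2\otimes\mathbb{C}^3\otimes\mathbb{C}^3$ (a tensor of rank $4$) and $\varphi(\mathbf{a},\mathbf{b},\mathbf{c})=a_1b_1c_1+a_2b_1c_2+a_1b_2c_3+a_2b_3c_3$. A rank-one tensor $P=\mathbf{a}\otimes\mathbf{b}\otimes\mathbf{c}$ lies in the forbidden locus of $T_{13}$ if and only if one of the following holds: (i) ($a_1c_1+a_2c_2=0$ or $a_1b_2+a_2b_3=0$), and not ($b_2=b_3=0$), and not ($c_1=c_2=0$); (ii) ($b_3c_1-b_2c_2=0$ or $a_1c_1+a_2c_2=0$ or $a_1b_2+a_2b_3=0$) and $\varphi(\mathbf{a},\mathbf{b},\mathbf{c})=0$.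
   Context: $\mathbf{e}^i_j$ is the $j$-th standard basis vector of the $i$-th factor and $\mathbf{a}=(a_1,a_2)$, $\mathbf{b}=(b_1,b_2,b_3)$, $\mathbf{c}=(c_1,c_2,c_3)$ are nonzero coordinate vectors. The rank of a tensor is the minimal number of rank-one tensors summing to it; $P$ is in the forbidden locus of $T$ if $\mathrm{rk}(T-\lambda P)\ge\mathrm{rk}(T)$ for all $\lambda\in\mathbb{C}$. *)

theory Defs
  imports Complex_Main
begin

text \<open>Tensors in C^2 (x) C^3 (x) C^3 are represented as functions of three
  0-based indices (i < 2, j < 3, k < 3), zero outside that range. Vectors are
  functions nat => complex of which only the entries 0..1 (resp. 0..2) matter;
  so the paper's a_1, a_2 are a 0, a 1, etc.\<close>

type_synonym tensor = "nat \<Rightarrow> nat \<Rightarrow> nat \<Rightarrow> complex"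

definition outer :: "(nat \<Rightarrow> complex) \<Rightarrow> (nat \<Rightarrow> complex) \<Rightarrow> (nat \<Rightarrow> complex) \<Rightarrow> tensor" where
  "outer a b c = (\<lambda>i j k. if i < 2 \<and> j < 3 \<and> k < 3 then a i * b j * c k else 0)"

definition ebasis :: "nat \<Rightarrow> nat \<Rightarrow> complex" where
  "ebasis n = (\<lambda>i. if i = n then 1 else 0)"

text \<open>Rank: minimal number of rank-one tensors summing to T (allowing zero
  summands does not change the minimum).\<close>
definition tensor_rank :: "tensor \<Rightarrow> nat" where
  "tensor_rank T = (LEAST r. \<exists>a b c :: nat \<Rightarrow> nat \<Rightarrow> complex.
      T = (\<lambda>i j k. \<Sum>l<r. outer (a l) (b l) (c l) i j k))"

definition forbidden :: "tensor \<Rightarrow> tensor \<Rightarrow> bool" where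
  "forbidden T P = (\<forall>t::complex. tensor_rank (\<lambda>i j k. T i j k - t * P i j k) \<ge> tensor_rank T)"

definition T13 :: tensor where
  "T13 = (\<lambda>i j k. outer (ebasis 0) (ebasis 0) (ebasis 0) i j k
                + outer (ebasis 0) (ebasis 1) (ebasis 2) i j k
                + outer (ebasis 1) (ebasis 0) (ebasis 1) i j k
                + outer (ebasis 1) (ebasis 2) (ebasis 2) i j k)"

definition phi :: "(nat \<Rightarrow> complex) \<Rightarrow> (nat \<Rightarrow> complex) \<Rightarrow> (nat \<Rightarrow> complex) \<Rightarrow> complex" where
  "phi a b c = a 0 * b 0 * c 0 + a 1 * b 0 * c 1 + a 0 * b 1 * c 2 + a 1 * b 2 * c 2"

end

theory Submission
  imports Defs
begin


definition det3 :: "(nat \<Rightarrow> nat \<Rightarrow> complex) \<Rightarrow> complex" where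
 "det3 m = m 0 0 * (m 1 1 * m 2 2 - m 1 2 * m 2 1) - m 0 1 * (m 1 0 * m 2 2 - m 1 2 * m 2 0)
         + m 0 2 * (m 1 0 * m 2 1 - m 1 1 * m 2 0)"

definition D1 :: "(nat \<Rightarrow> nat \<Rightarrow> complex) \<Rightarrow> (nat \<Rightarrow> nat \<Rightarrow> complex) \<Rightarrow> complex" where
 "D1 A B = det3 (\<lambda>j k. if k = 0 then B j k else A j k) + det3 (\<lambda>j k. if k = 1 then B j k else A j k)
         + det3 (\<lambda>j k. if k = 2 then B j k else A j k)"

definition pen :: "tensor \<Rightarrow> complex \<Rightarrow> complex \<Rightarrow> nat \<Rightarrow> nat \<Rightarrow> complex" where
 "pen M s u = (\<lambda>j k. s * M 0 j k + u * M 1 j k)"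

definition dec3 :: "tensor \<Rightarrow> (nat \<Rightarrow> nat \<Rightarrow> complex) \<Rightarrow> (nat \<Rightarrow> nat \<Rightarrow> complex) \<Rightarrow> (nat \<Rightarrow> nat \<Rightarrow> complex) \<Rightarrow> bool" where
 "dec3 M al x y = (\<forall>i<2. \<forall>j<3. \<forall>k<3. M i j k = (\<Sum>l<3. al l i * x l j * y l k))"

lemma sum3: "(\<Sum>l<3. f (l::nat)) = f 0 + f 1 + (f 2 :: complex)"
  by (simp add: eval_nat_numeral)

lemma all_lt2: "(\<forall>i::nat<2. Q i) = (Q 0 \<and> Q 1)"
  by (auto simp: eval_nat_numeral less_Suc_eq)

lemma all_lt3: "(\<forall>i::nat<3. Q i) = (Q 0 \<and> Q 1 \<and> Q 2)"
  by (auto simp: eval_nat_numeral less_Suc_eq)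

lemma det3_mult: "det3 (\<lambda>j n. \<Sum>l<3. x j l * z l n) = det3 x * det3 z"
  unfolding det3_def sum3 by algebra

lemma det3_diag: "det3 (\<lambda>j k. \<Sum>l<3. d l * x l j * y l k) = d 0 * d 1 * d 2 * det3 (\<lambda>j l. x l j) * det3 (\<lambda>l k. y l k)"
  unfolding det3_def sum3 by algebra

lemma D1_diag: "D1 (\<lambda>j k. \<Sum>l<3. d l * x l j * y l k) (\<lambda>j k. \<Sum>l<3. e l * x l j * y l k)
   = (e 0 * d 1 * d 2 + d 0 * e 1 * d 2 + d 0 * d 1 * e 2) * det3 (\<lambda>j l. x l j) * det3 (\<lambda>l k. y l k)"
  unfolding D1_def det3_def sum3 by (simp; algebra)

lemma det3_cong: "\<forall>j<3. \<forall>k<3. A j k = B j k \<Longrightarrow> det3 A = det3 B"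
  unfolding all_lt3 det3_def by simp

lemma D1_cong: "\<forall>j<3. \<forall>k<3. A j k = B j k \<Longrightarrow> \<forall>j<3. \<forall>k<3. A' j k = B' j k \<Longrightarrow> D1 A A' = D1 B B'"
  unfolding all_lt3 D1_def det3_def by simp

lemma pen_dec:
  assumes d: "dec3 M al x y" and jk: "j < 3" "k < 3"
  shows "pen M s u j k = (\<Sum>l<3. (s * al l 0 + u * al l 1) * x l j * y l k)"
proof -
  have "M 0 j k = (\<Sum>l<3. al l 0 * x l j * y l k)" "M 1 j k = (\<Sum>l<3. al l 1 * x l j * y l k)"
    using d jk unfolding dec3_def by auto
  then show ?thesis unfolding pen_def sum3 by (simp add: algebra_simps)
qed

lemma det_pen:
  assumes d: "dec3 M al x y"
  shows "det3 (pen M s u) = (s * al 0 0 + u * al 0 1) * (s * al 1 0 + u * al 1 1) * (s * al 2 0 + u * al 2 1)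
      * det3 (\<lambda>j l. x l j) * det3 (\<lambda>l k. y l k)"
proof -
  have "det3 (pen M s u) = det3 (\<lambda>j k. \<Sum>l<3. (s * al l 0 + u * al l 1) * x l j * y l k)"
    using pen_dec[OF d] by (intro det3_cong) auto
  then show ?thesis by (simp only: det3_diag)
qed

lemma D1_pen:
  assumes d: "dec3 M al x y"
  shows "D1 (pen M p0 p1) (pen M q0 q1) =
     ((q0 * al 0 0 + q1 * al 0 1) * (p0 * al 1 0 + p1 * al 1 1) * (p0 * al 2 0 + p1 * al 2 1)
    + (p0 * al 0 0 + p1 * al 0 1) * (q0 * al 1 0 + q1 * al 1 1) * (p0 * al 2 0 + p1 * al 2 1)
    + (p0 * al 0 0 + p1 * al 0 1) * (p0 * al 1 0 + p1 * al 1 1) * (q0 * al 2 0 + q1 * al 2 1))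
      * det3 (\<lambda>j l. x l j) * det3 (\<lambda>l k. y l k)"
proof -
  have "D1 (pen M p0 p1) (pen M q0 q1) = D1 (\<lambda>j k. \<Sum>l<3. (p0 * al l 0 + p1 * al l 1) * x l j * y l k)
     (\<lambda>j k. \<Sum>l<3. (q0 * al l 0 + q1 * al l 1) * x l j * y l k)"
    using pen_dec[OF d] by (intro D1_cong) auto
  then show ?thesis by (simp only: D1_diag)
qed

lemma LB_reg:
  assumes d: "dec3 M al x y" and q: "det3 (pen M q0 q1) \<noteq> 0" and p: "det3 (pen M p0 p1) = 0"
    and D: "D1 (pen M p0 p1) (pen M q0 q1) = 0"
  shows "\<exists>\<mu> xx yy. \<forall>j<3. \<forall>k<3. pen M p0 p1 j k = \<mu> * xx j * yy k"
proof -
  define dp where "dp l = p0 * al l 0 + p1 * al l 1" for l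
  define dq where "dq l = q0 * al l 0 + q1 * al l 1" for l
  have q': "dq 0 * dq 1 * dq 2 * det3 (\<lambda>j l. x l j) * det3 (\<lambda>l k. y l k) \<noteq> 0"
    using q det_pen[OF d] unfolding dq_def by metis
  have p': "dp 0 * dp 1 * dp 2 * det3 (\<lambda>j l. x l j) * det3 (\<lambda>l k. y l k) = 0"
    using p det_pen[OF d] unfolding dp_def by metis
  have D': "(dq 0 * dp 1 * dp 2 + dp 0 * dq 1 * dp 2 + dp 0 * dp 1 * dq 2) * det3 (\<lambda>j l. x l j) * det3 (\<lambda>l k. y l k) = 0"
    using D D1_pen[OF d] unfolding dp_def dq_def by metis
  have two: "(dp 0 = 0 \<and> dp 1 = 0) \<or> (dp 0 = 0 \<and> dp 2 = 0) \<or> (dp 1 = 0 \<and> dp 2 = 0)"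
    using q' p' D' by auto
  have pe: "pen M p0 p1 j k = dp 0 * x 0 j * y 0 k + dp 1 * x 1 j * y 1 k + dp 2 * x 2 j * y 2 k"
    if "j < 3" "k < 3" for j k
    using pen_dec[OF d that] unfolding dp_def sum3 by simp
  from two show ?thesis
  proof (elim disjE conjE)
    assume "dp 0 = 0" "dp 1 = 0"
    then show ?thesis using pe by (intro exI[of _ "dp 2"] exI[of _ "x 2"] exI[of _ "y 2"]) simp
  next
    assume "dp 0 = 0" "dp 2 = 0"
    then show ?thesis using pe by (intro exI[of _ "dp 1"] exI[of _ "x 1"] exI[of _ "y 1"]) simp
  next
    assume "dp 1 = 0" "dp 2 = 0"
    then show ?thesis using pe by (intro exI[of _ "dp 0"] exI[of _ "x 0"] exI[of _ "y 0"]) simp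
  qed
qed

lemma PH:
  fixes p0 q0 p1 q1 p2 q2 :: complex
  assumes "p0 \<noteq> 0 \<or> q0 \<noteq> 0" "p1 \<noteq> 0 \<or> q1 \<noteq> 0" "p2 \<noteq> 0 \<or> q2 \<noteq> 0"
    "p0 * p1 * p2 = 0" "q0 * q1 * q2 = 0" "(p0 + q0) * (p1 + q1) * (p2 + q2) = 0"
    "(p0 + 2 * q0) * (p1 + 2 * q1) * (p2 + 2 * q2) = 0"
  shows False
proof -
  have l: "\<And>p q::complex. p \<noteq> 0 \<or> q \<noteq> 0 \<Longrightarrow> (if p = 0 then 1 else 0) + (if q = 0 then 1 else 0)
     + (if p + q = 0 then 1 else 0) + (if p + 2 * q = 0 then 1 else (0::nat)) \<le> 1"
    by (auto simp: add_eq_0_iff2)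
  show False using assms l[of p0 q0] l[of p1 q1] l[of p2 q2] by (auto split: if_splits)
qed

lemma det3_zero_row:
  assumes "l < 3" "Z l 0 = 0" "Z l 1 = 0" "Z l 2 = 0"
  shows "det3 Z = 0"
proof -
  have "l = 0 \<or> l = 1 \<or> l = 2" using assms(1) by auto
  then show ?thesis using assms by (auto simp: det3_def)
qed

lemma LB_sing:
  assumes d: "dec3 M al x y"
    and ik: "\<forall>n<3. ii n < 2 \<and> kk n < 3" and L: "det3 (\<lambda>j n. M (ii n) j (kk n)) \<noteq> 0"
    and ij: "\<forall>n<3. ii' n < 2 \<and> jj n < 3" and R: "det3 (\<lambda>n k. M (ii' n) (jj n) k) \<noteq> 0"
    and z: "det3 (pen M 1 0) = 0" "det3 (pen M 0 1) = 0" "det3 (pen M 1 1) = 0" "det3 (pen M 1 2) = 0"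
  shows False
proof -
  define Z where "Z l n = al l (ii n) * y l (kk n)" for l n
  have "det3 (\<lambda>j n. M (ii n) j (kk n)) = det3 (\<lambda>j n. \<Sum>l<3. x l j * Z l n)"
    using d ik unfolding dec3_def Z_def by (intro det3_cong) (auto simp: mult_ac)
  then have "det3 (\<lambda>j n. M (ii n) j (kk n)) = det3 (\<lambda>j l. x l j) * det3 Z"
    using det3_mult[of "\<lambda>j l. x l j" Z] by simp
  then have X: "det3 (\<lambda>j l. x l j) \<noteq> 0" and Zn: "det3 Z \<noteq> 0" using L by auto
  define Z' where "Z' n l = al l (ii' n) * x l (jj n)" for l n
  have "det3 (\<lambda>n k. M (ii' n) (jj n) k) = det3 (\<lambda>n k. \<Sum>l<3. Z' n l * y l k)"
    using d ij unfolding dec3_def Z'_def by (intro det3_cong) auto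
  then have "det3 (\<lambda>n k. M (ii' n) (jj n) k) = det3 Z' * det3 (\<lambda>l k. y l k)"
    using det3_mult[of Z' "\<lambda>l k. y l k"] by simp
  then have Y: "det3 (\<lambda>l k. y l k) \<noteq> 0" using R by auto
  have nz: "al l 0 \<noteq> 0 \<or> al l 1 \<noteq> 0" if "l < 3" for l
  proof (rule ccontr)
    assume "\<not> (al l 0 \<noteq> 0 \<or> al l 1 \<noteq> 0)"
    then have "al l (ii n) = 0" if "n < 3" for n
      using ik that by (metis less_2_cases One_nat_def)
    then have "det3 Z = 0" using \<open>l < 3\<close> by (intro det3_zero_row) (auto simp: Z_def)
    then show False using Zn by simp
  qed
  have pr: "(s * al 0 0 + u * al 0 1) * (s * al 1 0 + u * al 1 1) * (s * al 2 0 + u * al 2 1) = 0"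
    if "det3 (pen M s u) = 0" for s u
    using that det_pen[OF d, of s u] X Y by simp
  show False
    using PH[of "al 0 0" "al 0 1" "al 1 0" "al 1 1" "al 2 0" "al 2 1"] nz[of 0] nz[of 1] nz[of 2]
      pr[OF z(1)] pr[OF z(2)] pr[OF z(3)] pr[OF z(4)] by simp
qed

lemma three_forms:
  fixes p0 q0 p1 q1 p2 q2 :: complex
  assumes "p0 \<noteq> 0 \<or> q0 \<noteq> 0" "p1 \<noteq> 0 \<or> q1 \<noteq> 0" "p2 \<noteq> 0 \<or> q2 \<noteq> 0"
  shows "\<exists>s u. (s * p0 + u * q0) * (s * p1 + u * q1) * (s * p2 + u * q2) \<noteq> 0"
proof (rule ccontr)
  assume "\<not> ?thesis"
  then have "\<forall>s u. (s * p0 + u * q0) * (s * p1 + u * q1) * (s * p2 + u * q2) = 0" by blast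
  from this[rule_format, of 1 0] this[rule_format, of 0 1] this[rule_format, of 1 1] this[rule_format, of 1 2]
  show False using PH[OF assms] by simp
qed


lemma rank_dec:
  assumes r: "tensor_rank M \<le> 3" and ex: "\<exists>(r::nat) a b c. M = (\<lambda>i j k. \<Sum>l<r. outer (a l) (b l) (c l) i j k)"
  shows "\<exists>al x y. dec3 M al x y"
proof -
  let ?r = "tensor_rank M"
  define P where "P r = (\<exists>a b c :: nat \<Rightarrow> nat \<Rightarrow> complex. M = (\<lambda>i j k. \<Sum>l<r. outer (a l) (b l) (c l) i j k))" for r
  have "\<exists>r. P r" using ex unfolding P_def by blast
  then have "P (LEAST r. P r)" by (rule LeastI_ex)
  moreover have "?r = (LEAST r. P r)" unfolding tensor_rank_def P_def by simp
  ultimately have "\<exists>a b c :: nat \<Rightarrow> nat \<Rightarrow> complex. M = (\<lambda>i j k. \<Sum>l<?r. outer (a l) (b l) (c l) i j k)"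
    unfolding P_def by simp
  then obtain R a b c where Rr: "R \<le> 3" and
    M: "M = (\<lambda>i j k. \<Sum>l<(R::nat). outer (a l) (b l) (c l) i j k)" using r by blast
  define al where "al l = (if l < R then a l else (\<lambda>_. 0))" for l
  have "dec3 M al b c"
    unfolding dec3_def
  proof (intro allI impI)
    fix i j k :: nat assume ijk: "i < 2" "j < 3" "k < 3"
    have "M i j k = (\<Sum>l<R. al l i * b l j * c l k)"
      using ijk unfolding M outer_def al_def by simp
    also have "\<dots> = (\<Sum>l<3. al l i * b l j * c l k)"
      using Rr by (intro sum.mono_neutral_left) (auto simp: al_def)
    finally show "M i j k = (\<Sum>l<3. al l i * b l j * c l k)" .
  qed
  then show ?thesis by blast
qed

lemma dec_rank:
  assumes d: "dec3 M al x y" and out: "\<And>i j k. \<not> (i < 2 \<and> j < 3 \<and> k < 3) \<Longrightarrow> M i j k = 0"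
  shows "tensor_rank M \<le> 3"
  unfolding tensor_rank_def
proof (rule Least_le)
  show "\<exists>a b c :: nat \<Rightarrow> nat \<Rightarrow> complex. M = (\<lambda>i j k. \<Sum>l<3. outer (a l) (b l) (c l) i j k)"
  proof (intro exI ext)
    fix i j k
    show "M i j k = (\<Sum>l<3. outer (al l) (x l) (y l) i j k)"
      using d out[of i j k] unfolding dec3_def outer_def by (cases "i < 2 \<and> j < 3 \<and> k < 3") auto
  qed
qed



definition MT :: "complex \<Rightarrow> (nat \<Rightarrow> complex) \<Rightarrow> (nat \<Rightarrow> complex) \<Rightarrow> (nat \<Rightarrow> complex) \<Rightarrow> tensor" where
  "MT t a b c = (\<lambda>i j k. T13 i j k - t * outer a b c i j k)"

lemma MT_out: "\<not> (i < 2 \<and> j < 3 \<and> k < 3) \<Longrightarrow> MT t a b c i j k = 0"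
  unfolding MT_def T13_def outer_def by auto

lemma MT_ex: "\<exists>(r::nat) a' b' c'. MT t a b c = (\<lambda>i j k. \<Sum>l<r. outer (a' l) (b' l) (c' l) i j k)"
proof (intro exI ext)
  fix i j k
  show "MT t a b c i j k = (\<Sum>l<5. outer ([ebasis 0, ebasis 0, ebasis 1, ebasis 1, \<lambda>i. - t * a i] ! l)
     ([ebasis 0, ebasis 1, ebasis 0, ebasis 2, b] ! l) ([ebasis 0, ebasis 2, ebasis 1, ebasis 2, c] ! l) i j k)"
    unfolding MT_def T13_def by (simp add: eval_nat_numeral outer_def algebra_simps)
qed

lemma T13_rank_le: "tensor_rank T13 \<le> 4"
  unfolding tensor_rank_def
proof (rule Least_le)
  show "\<exists>a b c :: nat \<Rightarrow> nat \<Rightarrow> complex. T13 = (\<lambda>i j k. \<Sum>l<4. outer (a l) (b l) (c l) i j k)"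
    by (rule exI[of _ "\<lambda>l. [ebasis 0, ebasis 0, ebasis 1, ebasis 1] ! l"],
        rule exI[of _ "\<lambda>l. [ebasis 0, ebasis 1, ebasis 0, ebasis 2] ! l"],
        rule exI[of _ "\<lambda>l. [ebasis 0, ebasis 2, ebasis 1, ebasis 2] ! l"])
       (simp add: T13_def eval_nat_numeral)
qed

lemma DET: "det3 (pen (MT t a b c) s u) = - t * (a 0 * s + a 1 * u) * (b 1 * u - b 2 * s) * (c 1 * s - c 0 * u)"
  unfolding det3_def pen_def MT_def T13_def outer_def ebasis_def by (simp; algebra)

lemma D1F: "D1 (pen (MT t a b c) p0 p1) (pen (MT t a b c) q0 q1) = - t * (
     (a 0 * q0 + a 1 * q1) * (b 1 * p1 - b 2 * p0) * (c 1 * p0 - c 0 * p1)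
   + (a 0 * p0 + a 1 * p1) * (b 1 * q1 - b 2 * q0) * (c 1 * p0 - c 0 * p1)
   + (a 0 * p0 + a 1 * p1) * (b 1 * p1 - b 2 * p0) * (c 1 * q0 - c 0 * q1))"
  unfolding D1_def det3_def pen_def MT_def T13_def outer_def ebasis_def by (simp; algebra)

lemma F1a:
  assumes "b 1 = 0" "b 2 = 0" "a 0 * c 0 + a 1 * c 1 = 0"
  shows "\<not> tensor_rank (MT t a b c) \<le> 3"
proof
  assume "tensor_rank (MT t a b c) \<le> 3"
  then obtain al x y where d: "dec3 (MT t a b c) al x y" using rank_dec MT_ex by blast
  have z: "det3 (pen (MT t a b c) s u) = 0" for s u by (simp only: DET assms) simp
  have R: "det3 (\<lambda>n k. MT t a b c ([0,1,0]!n) ([0,0,1]!n) k) = 1"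
    using assms unfolding det3_def MT_def T13_def outer_def ebasis_def by (simp; algebra)
  have L1: "det3 (\<lambda>j n. MT t a b c ([0,0,1]!n) j ([0,2,2]!n)) = 1 - t * a 0 * b 0 * c 0"
    using assms unfolding det3_def MT_def T13_def outer_def ebasis_def by (simp; algebra)
  have L2: "det3 (\<lambda>j n. MT t a b c ([1,0,1]!n) j ([1,2,2]!n)) = 1 - t * a 1 * b 0 * c 1"
    using assms unfolding det3_def MT_def T13_def outer_def ebasis_def by (simp; algebra)
  have ij: "\<forall>n<3. [0,1,0::nat]!n < 2 \<and> [0,0,1::nat]!n < 3" unfolding all_lt3 by simp
  have ik1: "\<forall>n<3. [0,0,1::nat]!n < 2 \<and> [0,2,2::nat]!n < 3" unfolding all_lt3 by simp
  have ik2: "\<forall>n<3. [1,0,1::nat]!n < 2 \<and> [1,2,2::nat]!n < 3" unfolding all_lt3 by simp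
  have R': "det3 (\<lambda>n k. MT t a b c ([0,1,0]!n) ([0,0,1]!n) k) \<noteq> 0" using R by simp
  have sum2: "(1 - t * a 0 * b 0 * c 0) + (1 - t * a 1 * b 0 * c 1) = 2" using assms(3) by algebra
  show False
  proof (cases "1 - t * a 0 * b 0 * c 0 = 0")
    case True
    have e: "1 - t * a 1 * b 0 * c 1 = 2" using sum2 unfolding True by simp
    have "det3 (\<lambda>j n. MT t a b c ([1,0,1]!n) j ([1,2,2]!n)) \<noteq> 0" unfolding L2 e by simp
    then show False by (rule LB_sing[OF d ik2 _ ij R' z z z z])
  next
    case False
    then have "det3 (\<lambda>j n. MT t a b c ([0,0,1]!n) j ([0,2,2]!n)) \<noteq> 0" using L1 by simp
    then show False by (rule LB_sing[OF d ik1 _ ij R' z z z z])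
  qed
qed



lemma F1b:
  assumes "c 0 = 0" "c 1 = 0" "a 0 * b 1 + a 1 * b 2 = 0"
  shows "\<not> tensor_rank (MT t a b c) \<le> 3"
proof
  assume "tensor_rank (MT t a b c) \<le> 3"
  then obtain al x y where d: "dec3 (MT t a b c) al x y" using rank_dec MT_ex by blast
  have z: "det3 (pen (MT t a b c) s u) = 0" for s u by (simp only: DET assms) simp
  have L: "det3 (\<lambda>j n. MT t a b c ([0,0,1]!n) j ([0,2,2]!n)) = 1"
    using assms unfolding det3_def MT_def T13_def outer_def ebasis_def by (simp; algebra)
  have R1: "det3 (\<lambda>n k. MT t a b c ([0,1,0]!n) ([0,0,1]!n) k) = 1 - t * a 0 * b 1 * c 2"
    using assms unfolding det3_def MT_def T13_def outer_def ebasis_def by (simp; algebra)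
  have R2: "det3 (\<lambda>n k. MT t a b c ([0,1,1]!n) ([0,0,2]!n) k) = 1 - t * a 1 * b 2 * c 2"
    using assms unfolding det3_def MT_def T13_def outer_def ebasis_def by (simp; algebra)
  have ik: "\<forall>n<3. [0,0,1::nat]!n < 2 \<and> [0,2,2::nat]!n < 3" unfolding all_lt3 by simp
  have ij1: "\<forall>n<3. [0,1,0::nat]!n < 2 \<and> [0,0,1::nat]!n < 3" unfolding all_lt3 by simp
  have ij2: "\<forall>n<3. [0,1,1::nat]!n < 2 \<and> [0,0,2::nat]!n < 3" unfolding all_lt3 by simp
  have L': "det3 (\<lambda>j n. MT t a b c ([0,0,1]!n) j ([0,2,2]!n)) \<noteq> 0" using L by simp
  have sum2: "(1 - t * a 0 * b 1 * c 2) + (1 - t * a 1 * b 2 * c 2) = 2" using assms(3) by algebra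
  show False
  proof (cases "1 - t * a 0 * b 1 * c 2 = 0")
    case True
    have e: "1 - t * a 1 * b 2 * c 2 = 2" using sum2 unfolding True by simp
    have "det3 (\<lambda>n k. MT t a b c ([0,1,1]!n) ([0,0,2]!n) k) \<noteq> 0" unfolding R2 e by simp
    then show False by (rule LB_sing[OF d ik L' ij2 _ z z z z])
  next
    case False
    then have "det3 (\<lambda>n k. MT t a b c ([0,1,0]!n) ([0,0,1]!n) k) \<noteq> 0" using R1 by simp
    then show False by (rule LB_sing[OF d ik L' ij1 _ z z z z])
  qed
qed

lemma MT0: "MT 0 a b c = T13" unfolding MT_def by simp

lemma T13_rank: "tensor_rank T13 = 4"
proof -
  have "\<not> tensor_rank (MT 0 (\<lambda>_. 0) (\<lambda>_. 0) (\<lambda>_. 0)) \<le> 3" by (rule F1a) simp_all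
  then show ?thesis using T13_rank_le unfolding MT0 by simp
qed




lemma minor0:
  fixes A :: "nat \<Rightarrow> nat \<Rightarrow> complex"
  assumes "\<forall>j<3. \<forall>k<3. A j k = \<mu> * xx j * yy k" "j1 < 3" "j2 < 3" "k1 < 3" "k2 < 3"
  shows "A j1 k1 * A j2 k2 - A j1 k2 * A j2 k1 = 0"
  using assms by (simp add: mult_ac)

lemma LB_app:
  assumes q: "det3 (pen (MT t a b c) q0 q1) \<noteq> 0" and p: "det3 (pen (MT t a b c) p0 p1) = 0"
    and D: "D1 (pen (MT t a b c) p0 p1) (pen (MT t a b c) q0 q1) = 0"
    and m: "j1 < 3" "j2 < 3" "k1 < 3" "k2 < 3"
    "pen (MT t a b c) p0 p1 j1 k1 * pen (MT t a b c) p0 p1 j2 k2 - pen (MT t a b c) p0 p1 j1 k2 * pen (MT t a b c) p0 p1 j2 k1 \<noteq> 0"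
  shows "\<not> tensor_rank (MT t a b c) \<le> 3"
proof
  assume "tensor_rank (MT t a b c) \<le> 3"
  then obtain al x y where d: "dec3 (MT t a b c) al x y" using rank_dec MT_ex by blast
  from LB_reg[OF d q p D] obtain \<mu> xx yy where "\<forall>j<3. \<forall>k<3. pen (MT t a b c) p0 p1 j k = \<mu> * xx j * yy k"
    by blast
  from minor0[OF this m(1-4)] m(5) show False by simp
qed

lemma q_exists:
  assumes a: "a 0 \<noteq> 0 \<or> a 1 \<noteq> 0" and b: "b 1 \<noteq> 0 \<or> b 2 \<noteq> 0" and c: "c 0 \<noteq> 0 \<or> c 1 \<noteq> 0" and t: "t \<noteq> 0"
  shows "\<exists>q0 q1. det3 (pen (MT t a b c) q0 q1) \<noteq> 0"
proof -
  obtain s u where "(s * a 0 + u * a 1) * (s * (- b 2) + u * b 1) * (s * c 1 + u * (- c 0)) \<noteq> 0"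
    using three_forms[of "a 0" "a 1" "- b 2" "b 1" "c 1" "- c 0"] a b c by auto
  moreover have "det3 (pen (MT t a b c) s u) = - t * ((s * a 0 + u * a 1) * (s * (- b 2) + u * b 1) * (s * c 1 + u * (- c 0)))"
    unfolding DET by algebra
  ultimately have "det3 (pen (MT t a b c) s u) \<noteq> 0" using t by simp
  then show ?thesis by blast
qed

lemma F2:
  assumes a: "a 0 \<noteq> 0 \<or> a 1 \<noteq> 0" and b: "b 1 \<noteq> 0 \<or> b 2 \<noteq> 0" and c: "c 0 \<noteq> 0 \<or> c 1 \<noteq> 0" and t: "t \<noteq> 0"
    and L: "(a 0 * c 0 + a 1 * c 1) * (a 0 * b 1 + a 1 * b 2) = 0"
  shows "\<not> tensor_rank (MT t a b c) \<le> 3"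
proof -
  obtain q0 q1 where q: "det3 (pen (MT t a b c) q0 q1) \<noteq> 0" using q_exists[OF a b c t] by blast
  have p: "det3 (pen (MT t a b c) (- a 1) (a 0)) = 0" unfolding DET by (simp add: algebra_simps)
  have D: "D1 (pen (MT t a b c) (- a 1) (a 0)) (pen (MT t a b c) q0 q1) = 0"
    unfolding D1F using L by algebra
  have m1: "pen (MT t a b c) (- a 1) (a 0) 0 0 * pen (MT t a b c) (- a 1) (a 0) 1 2
     - pen (MT t a b c) (- a 1) (a 0) 0 2 * pen (MT t a b c) (- a 1) (a 0) 1 0 = (a 1)^2"
    unfolding pen_def MT_def T13_def outer_def ebasis_def by (simp; algebra)
  have m2: "pen (MT t a b c) (- a 1) (a 0) 0 1 * pen (MT t a b c) (- a 1) (a 0) 2 2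
     - pen (MT t a b c) (- a 1) (a 0) 0 2 * pen (MT t a b c) (- a 1) (a 0) 2 1 = (a 0)^2"
    unfolding pen_def MT_def T13_def outer_def ebasis_def by (simp; algebra)
  show ?thesis
  proof (cases "a 1 = 0")
    case True
    then have mm: "pen (MT t a b c) (- a 1) (a 0) 0 1 * pen (MT t a b c) (- a 1) (a 0) 2 2
     - pen (MT t a b c) (- a 1) (a 0) 0 2 * pen (MT t a b c) (- a 1) (a 0) 2 1 \<noteq> 0" using m2 a by simp
    show ?thesis by (rule LB_app[OF q p D _ _ _ _ mm]) simp_all
  next
    case False
    then have mm: "pen (MT t a b c) (- a 1) (a 0) 0 0 * pen (MT t a b c) (- a 1) (a 0) 1 2
     - pen (MT t a b c) (- a 1) (a 0) 0 2 * pen (MT t a b c) (- a 1) (a 0) 1 0 \<noteq> 0" using m1 by simp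
    show ?thesis by (rule LB_app[OF q p D _ _ _ _ mm]) simp_all
  qed
qed

lemma F3:
  assumes a: "a 0 \<noteq> 0 \<or> a 1 \<noteq> 0" and b: "b 1 \<noteq> 0 \<or> b 2 \<noteq> 0" and c: "c 0 \<noteq> 0 \<or> c 1 \<noteq> 0" and t: "t \<noteq> 0"
    and bc: "b 2 * c 0 - b 1 * c 1 = 0" and ph: "phi a b c = 0"
  shows "\<not> tensor_rank (MT t a b c) \<le> 3"
proof -
  obtain q0 q1 where q: "det3 (pen (MT t a b c) q0 q1) \<noteq> 0" using q_exists[OF a b c t] by blast
  have p: "det3 (pen (MT t a b c) (b 1) (b 2)) = 0" unfolding DET by (simp add: algebra_simps)
  have D: "D1 (pen (MT t a b c) (b 1) (b 2)) (pen (MT t a b c) q0 q1) = 0"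
    unfolding D1F using bc by algebra
  have m1: "pen (MT t a b c) (b 1) (b 2) 0 0 * pen (MT t a b c) (b 1) (b 2) 1 2
     - pen (MT t a b c) (b 1) (b 2) 0 2 * pen (MT t a b c) (b 1) (b 2) 1 0 = (b 1)^2"
    using bc ph unfolding phi_def pen_def MT_def T13_def outer_def ebasis_def by (simp; algebra)
  have m2: "pen (MT t a b c) (b 1) (b 2) 0 1 * pen (MT t a b c) (b 1) (b 2) 2 2
     - pen (MT t a b c) (b 1) (b 2) 0 2 * pen (MT t a b c) (b 1) (b 2) 2 1 = (b 2)^2"
    using bc ph unfolding phi_def pen_def MT_def T13_def outer_def ebasis_def by (simp; algebra)
  show ?thesis
  proof (cases "b 1 = 0")
    case True
    then have mm: "pen (MT t a b c) (b 1) (b 2) 0 1 * pen (MT t a b c) (b 1) (b 2) 2 2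
     - pen (MT t a b c) (b 1) (b 2) 0 2 * pen (MT t a b c) (b 1) (b 2) 2 1 \<noteq> 0" using m2 b by simp
    show ?thesis by (rule LB_app[OF q p D _ _ _ _ mm]) simp_all
  next
    case False
    then have mm: "pen (MT t a b c) (b 1) (b 2) 0 0 * pen (MT t a b c) (b 1) (b 2) 1 2
     - pen (MT t a b c) (b 1) (b 2) 0 2 * pen (MT t a b c) (b 1) (b 2) 1 0 \<noteq> 0" using m1 by simp
    show ?thesis by (rule LB_app[OF q p D _ _ _ _ mm]) simp_all
  qed
qed



lemma MT_rank_le3:
  assumes "dec3 (MT t a b c) al x y"
  shows "tensor_rank (MT t a b c) \<le> 3"
  using dec_rank[OF assms] MT_out by blast

lemma U2:
  assumes cc: "c 0 = 0" "c 1 = 0" and h: "t * phi a b c = 1"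
  shows "tensor_rank (MT t a b c) \<le> 3"
proof (rule MT_rank_le3)
  let ?T = "t * c 2"
  have h': "t * (c 2 * (a 0 * b 1 + a 1 * b 2)) = 1" using h cc unfolding phi_def by (simp add: algebra_simps)
  show "dec3 (MT t a b c) (\<lambda>l i. [[?T * b 2, - ?T * b 1], [1, 0], [0, 1]] ! l ! i)
     (\<lambda>l j. [[0, a 1, - a 0], [1, 0, 0], [1, 0, 0]] ! l ! j)
     (\<lambda>l k. [[0, 0, 1], [1, 0, - ?T * b 0 * a 0], [0, 1, - ?T * b 0 * a 1]] ! l ! k)"
    using h' cc unfolding dec3_def all_lt2 all_lt3 sum3 MT_def T13_def outer_def ebasis_def
    by (simp; algebra)
qed

lemma U3b:
  assumes bc: "b 2 * c 0 - b 1 * c 1 = 0" and h: "t * phi a b c = 1" and dd: "d * (a 0 * b 1 + a 1 * b 2) = 1"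
  shows "tensor_rank (MT t a b c) \<le> 3"
proof (rule MT_rank_le3)
  let ?T = "t * (a 0 * b 1 + a 1 * b 2)"
  have h': "t * (a 0 * b 0 * c 0 + a 1 * b 0 * c 1 + a 0 * b 1 * c 2 + a 1 * b 2 * c 2) = 1" using h unfolding phi_def by simp
  show "dec3 (MT t a b c) (\<lambda>l i. [[a 0 * d, a 1 * d], [- b 2 * d, b 1 * d], [- b 2 * d, b 1 * d]] ! l ! i)
     (\<lambda>l j. [[?T * c 2, - ?T * c 0, - ?T * c 1], [1, 0, 0], [0, - a 1, a 0]] ! l ! j)
     (\<lambda>l k. [[b 1, b 2, - b 0], [- a 1, a 0, 0], [0, 0, 1]] ! l ! k)"
    using h' bc dd unfolding dec3_def all_lt2 all_lt3 sum3 MT_def T13_def outer_def ebasis_def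
    by (simp; algebra)
qed

lemma U1:
  assumes b: "b 1 = 0" "b 2 = 0" and h: "t * phi a b c = 1"
  shows "tensor_rank (MT t a b c) \<le> 3"
proof (rule MT_rank_le3)
  let ?T = "t * b 0"
  have h': "t * (b 0 * (a 0 * c 0 + a 1 * c 1)) = 1" using h b unfolding phi_def by (simp add: algebra_simps)
  show "dec3 (MT t a b c) (\<lambda>l i. [[?T * c 1, - ?T * c 0], [1, 0], [0, 1]] ! l ! i)
     (\<lambda>l j. [[1, 0, 0], [- ?T * c 2 * a 0, 1, 0], [- ?T * c 2 * a 1, 0, 1]] ! l ! j)
     (\<lambda>l k. [[a 1, - a 0, 0], [0, 0, 1], [0, 0, 1]] ! l ! k)"
    using h' b unfolding dec3_def all_lt2 all_lt3 sum3 MT_def T13_def outer_def ebasis_def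
    by (simp; algebra)
qed



definition cross :: "(nat \<Rightarrow> complex) \<Rightarrow> (nat \<Rightarrow> complex) \<Rightarrow> nat \<Rightarrow> complex" where
  "cross p q = (\<lambda>j. [p 1 * q 2 - p 2 * q 1, p 2 * q 0 - p 0 * q 2, p 0 * q 1 - p 1 * q 0] ! j)"

definition adjv :: "(nat \<Rightarrow> nat \<Rightarrow> complex) \<Rightarrow> nat \<Rightarrow> nat \<Rightarrow> complex" where
  "adjv w = (\<lambda>l. [cross (w 1) (w 2), cross (w 2) (w 0), cross (w 0) (w 1)] ! l)"

lemma adj_id_all:
  "\<forall>j<3. \<forall>k<3. det3 w * det3 v * N j k =
    (\<Sum>l<3. \<Sum>m<3. (\<Sum>j'<3. \<Sum>k'<3. w l j' * N j' k' * v m k') * adjv w l j * adjv v m k)"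
  unfolding all_lt3 sum3 adjv_def cross_def det3_def by (simp; algebra)

lemma adj_id:
  assumes "j < 3" "k < 3"
  shows "det3 w * det3 v * N j k =
    (\<Sum>l<3. \<Sum>m<3. (\<Sum>j'<3. \<Sum>k'<3. w l j' * N j' k' * v m k') * adjv w l j * adjv v m k)"
  using adj_id_all assms by blast


lemma diag_dec:
  fixes M :: tensor and w v :: "nat \<Rightarrow> nat \<Rightarrow> complex"
  assumes off: "\<forall>i<2. \<forall>l<3. \<forall>m<3. l \<noteq> m \<longrightarrow> (\<Sum>j<3. \<Sum>k<3. w l j * M i j k * v m k) = 0"
    and W: "det3 w \<noteq> 0" and V: "det3 v \<noteq> 0"
  shows "\<exists>al x y. dec3 M al x y"
proof -
  define e where "e i l = (\<Sum>j<3. \<Sum>k<3. w l j * M i j k * v l k)" for i l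
  have "dec3 M (\<lambda>l i. e i l / (det3 w * det3 v)) (adjv w) (adjv v)"
    unfolding dec3_def
  proof (intro allI impI)
    fix i j k :: nat assume ijk: "i < 2" "j < 3" "k < 3"
    have o: "(\<Sum>j<3. \<Sum>k<3. w l j * M i j k * v m k) = 0" if "l < 3" "m < 3" "l \<noteq> m" for l m
      using off ijk that by blast
    have "det3 w * det3 v * M i j k =
      (\<Sum>l<3. \<Sum>m<3. (\<Sum>j'<3. \<Sum>k'<3. w l j' * M i j' k' * v m k') * adjv w l j * adjv v m k)"
      using adj_id[OF ijk(2,3)] by blast
    also have "\<dots> = (\<Sum>l<3. e i l * adjv w l j * adjv v l k)"
      unfolding e_def using o[of 0 1] o[of 0 2] o[of 1 0] o[of 1 2] o[of 2 0] o[of 2 1]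
      by (simp add: sum3)
    finally have "det3 w * det3 v * M i j k = (\<Sum>l<3. e i l * adjv w l j * adjv v l k)" .
    then show "M i j k = (\<Sum>l<3. e i l / (det3 w * det3 v) * adjv w l j * adjv v l k)"
      using W V by (simp add: sum3 field_simps)
  qed
  then show ?thesis by blast
qed

lemma U3a_off:
  "\<forall>i<2. \<forall>l<3. \<forall>m<3. l \<noteq> m \<longrightarrow>
    (\<Sum>j<3. \<Sum>k<3. (\<lambda>l j. [[0, a 0, a 1], [0, b 2, - b 1], [c 0 * (a 0 * c 0 + a 1 * c 1) * b 2 - c 1 * (a 0 * c 0 + a 1 * c 1) * b 1, c 1 * ((a 0 * c 0 + a 1 * c 1) * b 0 - 1) + c 2 * (a 0 * c 0 + a 1 * c 1) * b 2, - c 2 * (a 0 * c 0 + a 1 * c 1) * b 1 - c 0 * ((a 0 * c 0 + a 1 * c 1) * b 0 - 1)]] ! l ! j) l j * MT 1 a b c i j k * (\<lambda>l k. [[a 0, a 1, 0], [b 2 * ((a 0 * b 1 + a 1 * b 2) * c 2 - 1) + b 0 * (a 0 * b 1 + a 1 * b 2) * c 1, - b 0 * (a 0 * b 1 + a 1 * b 2) * c 0 - b 1 * ((a 0 * b 1 + a 1 * b 2) * c 2 - 1), b 1 * (a 0 * b 1 + a 1 * b 2) * c 1 - b 2 * (a 0 * b 1 + a 1 * b 2) * c 0], [c 1, - c 0, 0]] ! l ! k) m k) * ((a 0 * b 1 + a 1 * b 2) * (a 0 * c 0 + a 1 * c 1) * (b 2 * c 0 - b 1 * c 1)) = 0"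
  unfolding all_lt2 all_lt3 sum3 MT_def T13_def outer_def ebasis_def by (simp; algebra)

lemma U3a_W: "det3 (\<lambda>l j. [[0, a 0, a 1], [0, b 2, - b 1], [c 0 * (a 0 * c 0 + a 1 * c 1) * b 2 - c 1 * (a 0 * c 0 + a 1 * c 1) * b 1, c 1 * ((a 0 * c 0 + a 1 * c 1) * b 0 - 1) + c 2 * (a 0 * c 0 + a 1 * c 1) * b 2, - c 2 * (a 0 * c 0 + a 1 * c 1) * b 1 - c 0 * ((a 0 * c 0 + a 1 * c 1) * b 0 - 1)]] ! l ! j) = - (a 0 * c 0 + a 1 * c 1) * (b 2 * c 0 - b 1 * c 1) * (a 0 * b 1 + a 1 * b 2)"
  unfolding det3_def by (simp; algebra)

lemma U3a_V: "det3 (\<lambda>l k. [[a 0, a 1, 0], [b 2 * ((a 0 * b 1 + a 1 * b 2) * c 2 - 1) + b 0 * (a 0 * b 1 + a 1 * b 2) * c 1, - b 0 * (a 0 * b 1 + a 1 * b 2) * c 0 - b 1 * ((a 0 * b 1 + a 1 * b 2) * c 2 - 1), b 1 * (a 0 * b 1 + a 1 * b 2) * c 1 - b 2 * (a 0 * b 1 + a 1 * b 2) * c 0], [c 1, - c 0, 0]] ! l ! k) = - (a 0 * b 1 + a 1 * b 2) * (b 2 * c 0 - b 1 * c 1) * (a 0 * c 0 + a 1 * c 1)"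
  unfolding det3_def by (simp; algebra)

lemma U3a:
  assumes "(a 0 * b 1 + a 1 * b 2) \<noteq> 0" "(a 0 * c 0 + a 1 * c 1) \<noteq> 0" "(b 2 * c 0 - b 1 * c 1) \<noteq> 0"
  shows "tensor_rank (MT 1 a b c) \<le> 3"
proof -
  have "\<exists>al x y. dec3 (MT 1 a b c) al x y"
  proof (rule diag_dec)
    show "\<forall>i<2. \<forall>l<3. \<forall>m<3. l \<noteq> m \<longrightarrow> (\<Sum>j<3. \<Sum>k<3. (\<lambda>l j. [[0, a 0, a 1], [0, b 2, - b 1], [c 0 * (a 0 * c 0 + a 1 * c 1) * b 2 - c 1 * (a 0 * c 0 + a 1 * c 1) * b 1, c 1 * ((a 0 * c 0 + a 1 * c 1) * b 0 - 1) + c 2 * (a 0 * c 0 + a 1 * c 1) * b 2, - c 2 * (a 0 * c 0 + a 1 * c 1) * b 1 - c 0 * ((a 0 * c 0 + a 1 * c 1) * b 0 - 1)]] ! l ! j) l j * MT 1 a b c i j k * (\<lambda>l k. [[a 0, a 1, 0], [b 2 * ((a 0 * b 1 + a 1 * b 2) * c 2 - 1) + b 0 * (a 0 * b 1 + a 1 * b 2) * c 1, - b 0 * (a 0 * b 1 + a 1 * b 2) * c 0 - b 1 * ((a 0 * b 1 + a 1 * b 2) * c 2 - 1), b 1 * (a 0 * b 1 + a 1 * b 2) * c 1 - b 2 * (a 0 * b 1 + a 1 * b 2) * c 0], [c 1, - c 0, 0]] ! l ! k) m k) = 0"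
    proof (intro allI impI)
      fix i l m :: nat assume h: "i < 2" "l < 3" "m < 3" "l \<noteq> m"
      then have "(\<Sum>j<3. \<Sum>k<3. (\<lambda>l j. [[0, a 0, a 1], [0, b 2, - b 1], [c 0 * (a 0 * c 0 + a 1 * c 1) * b 2 - c 1 * (a 0 * c 0 + a 1 * c 1) * b 1, c 1 * ((a 0 * c 0 + a 1 * c 1) * b 0 - 1) + c 2 * (a 0 * c 0 + a 1 * c 1) * b 2, - c 2 * (a 0 * c 0 + a 1 * c 1) * b 1 - c 0 * ((a 0 * c 0 + a 1 * c 1) * b 0 - 1)]] ! l ! j) l j * MT 1 a b c i j k * (\<lambda>l k. [[a 0, a 1, 0], [b 2 * ((a 0 * b 1 + a 1 * b 2) * c 2 - 1) + b 0 * (a 0 * b 1 + a 1 * b 2) * c 1, - b 0 * (a 0 * b 1 + a 1 * b 2) * c 0 - b 1 * ((a 0 * b 1 + a 1 * b 2) * c 2 - 1), b 1 * (a 0 * b 1 + a 1 * b 2) * c 1 - b 2 * (a 0 * b 1 + a 1 * b 2) * c 0], [c 1, - c 0, 0]] ! l ! k) m k) * ((a 0 * b 1 + a 1 * b 2) * (a 0 * c 0 + a 1 * c 1) * (b 2 * c 0 - b 1 * c 1)) = 0" using U3a_off[of a b c] by blast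
      moreover have "((a 0 * b 1 + a 1 * b 2) * (a 0 * c 0 + a 1 * c 1) * (b 2 * c 0 - b 1 * c 1)) \<noteq> 0" using assms by (metis mult_eq_0_iff)
      ultimately show "(\<Sum>j<3. \<Sum>k<3. (\<lambda>l j. [[0, a 0, a 1], [0, b 2, - b 1], [c 0 * (a 0 * c 0 + a 1 * c 1) * b 2 - c 1 * (a 0 * c 0 + a 1 * c 1) * b 1, c 1 * ((a 0 * c 0 + a 1 * c 1) * b 0 - 1) + c 2 * (a 0 * c 0 + a 1 * c 1) * b 2, - c 2 * (a 0 * c 0 + a 1 * c 1) * b 1 - c 0 * ((a 0 * c 0 + a 1 * c 1) * b 0 - 1)]] ! l ! j) l j * MT 1 a b c i j k * (\<lambda>l k. [[a 0, a 1, 0], [b 2 * ((a 0 * b 1 + a 1 * b 2) * c 2 - 1) + b 0 * (a 0 * b 1 + a 1 * b 2) * c 1, - b 0 * (a 0 * b 1 + a 1 * b 2) * c 0 - b 1 * ((a 0 * b 1 + a 1 * b 2) * c 2 - 1), b 1 * (a 0 * b 1 + a 1 * b 2) * c 1 - b 2 * (a 0 * b 1 + a 1 * b 2) * c 0], [c 1, - c 0, 0]] ! l ! k) m k) = 0" by simp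
    qed
    show "det3 (\<lambda>l j. [[0, a 0, a 1], [0, b 2, - b 1], [c 0 * (a 0 * c 0 + a 1 * c 1) * b 2 - c 1 * (a 0 * c 0 + a 1 * c 1) * b 1, c 1 * ((a 0 * c 0 + a 1 * c 1) * b 0 - 1) + c 2 * (a 0 * c 0 + a 1 * c 1) * b 2, - c 2 * (a 0 * c 0 + a 1 * c 1) * b 1 - c 0 * ((a 0 * c 0 + a 1 * c 1) * b 0 - 1)]] ! l ! j) \<noteq> 0" unfolding U3a_W using assms by (metis mult_eq_0_iff neg_equal_0_iff_equal)
    show "det3 (\<lambda>l k. [[a 0, a 1, 0], [b 2 * ((a 0 * b 1 + a 1 * b 2) * c 2 - 1) + b 0 * (a 0 * b 1 + a 1 * b 2) * c 1, - b 0 * (a 0 * b 1 + a 1 * b 2) * c 0 - b 1 * ((a 0 * b 1 + a 1 * b 2) * c 2 - 1), b 1 * (a 0 * b 1 + a 1 * b 2) * c 1 - b 2 * (a 0 * b 1 + a 1 * b 2) * c 0], [c 1, - c 0, 0]] ! l ! k) \<noteq> 0" unfolding U3a_V using assms by (metis mult_eq_0_iff neg_equal_0_iff_equal)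
  qed
  then show ?thesis using dec_rank MT_out by blast
qed


lemma forb_iff: "forbidden T13 (outer a b c) \<longleftrightarrow> (\<forall>t. \<not> tensor_rank (MT t a b c) \<le> 3)"
proof -
  have "(\<lambda>i j k. T13 i j k - t * outer a b c i j k) = MT t a b c" for t by (simp add: MT_def)
  moreover have "\<And>r::nat. (4 \<le> r) = (\<not> r \<le> 3)" by arith
  ultimately show ?thesis unfolding forbidden_def T13_rank by simp
qed

lemma rank0: "\<not> tensor_rank (MT 0 a b c) \<le> 3"
  unfolding MT0 T13_rank by simp

theorem mainTheorem8:
  fixes a b c :: "nat \<Rightarrow> complex"
  assumes "a 0 \<noteq> 0 \<or> a 1 \<noteq> 0"
      and "b 0 \<noteq> 0 \<or> b 1 \<noteq> 0 \<or> b 2 \<noteq> 0"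
      and "c 0 \<noteq> 0 \<or> c 1 \<noteq> 0 \<or> c 2 \<noteq> 0"
  shows "forbidden T13 (outer a b c) \<longleftrightarrow>
    ((a 0 * c 0 + a 1 * c 1 = 0 \<or> a 0 * b 1 + a 1 * b 2 = 0)
       \<and> \<not> (b 1 = 0 \<and> b 2 = 0) \<and> \<not> (c 0 = 0 \<and> c 1 = 0))
    \<or> ((b 2 * c 0 - b 1 * c 1 = 0 \<or> a 0 * c 0 + a 1 * c 1 = 0 \<or> a 0 * b 1 + a 1 * b 2 = 0)
       \<and> phi a b c = 0)"
proof -
  note A = assms
  show ?thesis
  proof (cases "b 1 = 0 \<and> b 2 = 0")
    case True
    then have b: "b 1 = 0" "b 2 = 0" by auto
    have b0: "b 0 \<noteq> 0" using A(2) b by auto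
    have ph: "phi a b c = b 0 * (a 0 * c 0 + a 1 * c 1)" unfolding phi_def using b by (simp add: algebra_simps)
    have rhs: "?thesis \<longleftrightarrow> (forbidden T13 (outer a b c) \<longleftrightarrow> phi a b c = 0)" using b by simp
    show ?thesis
    proof (cases "phi a b c = 0")
      case True
      then have "a 0 * c 0 + a 1 * c 1 = 0" using ph b0 by simp
      then have "forbidden T13 (outer a b c)" unfolding forb_iff using F1a b by blast
      then show ?thesis using rhs True by simp
    next
      case False
      have "inverse (phi a b c) * phi a b c = 1" using False by simp
      then have "tensor_rank (MT (inverse (phi a b c)) a b c) \<le> 3" by (rule U1[OF b])
      then have "\<not> forbidden T13 (outer a b c)" unfolding forb_iff by blast
      then show ?thesis using rhs False by simp
    qed
  next
    case bnz: False
    show ?thesis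
    proof (cases "c 0 = 0 \<and> c 1 = 0")
      case True
      then have cc: "c 0 = 0" "c 1 = 0" by auto
      have c2: "c 2 \<noteq> 0" using A(3) cc by auto
      have ph: "phi a b c = c 2 * (a 0 * b 1 + a 1 * b 2)" unfolding phi_def using cc by (simp add: algebra_simps)
      have rhs: "?thesis \<longleftrightarrow> (forbidden T13 (outer a b c) \<longleftrightarrow> phi a b c = 0)" using cc by simp
      show ?thesis
      proof (cases "phi a b c = 0")
        case True
        then have "a 0 * b 1 + a 1 * b 2 = 0" using ph c2 by simp
        then have "forbidden T13 (outer a b c)" unfolding forb_iff using F1b cc by blast
        then show ?thesis using rhs True by simp
      next
        case False
        have "inverse (phi a b c) * phi a b c = 1" using False by simp
        then have "tensor_rank (MT (inverse (phi a b c)) a b c) \<le> 3" by (rule U2[OF cc])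
        then have "\<not> forbidden T13 (outer a b c)" unfolding forb_iff by blast
        then show ?thesis using rhs False by simp
      qed
    next
      case cnz: False
      have b12: "b 1 \<noteq> 0 \<or> b 2 \<noteq> 0" using bnz by auto
      have c01: "c 0 \<noteq> 0 \<or> c 1 \<noteq> 0" using cnz by auto
      show ?thesis
      proof (cases "a 0 * c 0 + a 1 * c 1 = 0 \<or> a 0 * b 1 + a 1 * b 2 = 0")
        case True
        have "forbidden T13 (outer a b c)" unfolding forb_iff
        proof
          fix t show "\<not> tensor_rank (MT t a b c) \<le> 3"
          proof (cases "t = 0")
            case True then show ?thesis using rank0 by simp
          next
            case False
            have "(a 0 * c 0 + a 1 * c 1) * (a 0 * b 1 + a 1 * b 2) = 0" using \<open>a 0 * c 0 + a 1 * c 1 = 0 \<or> a 0 * b 1 + a 1 * b 2 = 0\<close> by auto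
            then show ?thesis by (rule F2[OF A(1) b12 c01 False])
          qed
        qed
        then show ?thesis using True bnz cnz by simp
      next
        case nL: False
        then have Lc: "a 0 * c 0 + a 1 * c 1 \<noteq> 0" and Lb: "a 0 * b 1 + a 1 * b 2 \<noteq> 0" by auto
        show ?thesis
        proof (cases "b 2 * c 0 - b 1 * c 1 = 0")
          case bc: True
          show ?thesis
          proof (cases "phi a b c = 0")
            case True
            have "forbidden T13 (outer a b c)" unfolding forb_iff
            proof
              fix t show "\<not> tensor_rank (MT t a b c) \<le> 3"
              proof (cases "t = 0")
                case True then show ?thesis using rank0 by simp
              next
                case False
                show ?thesis by (rule F3[OF A(1) b12 c01 False bc \<open>phi a b c = 0\<close>])
              qed
            qed
            then show ?thesis using True bc by simp
          next
            case False
            have "inverse (phi a b c) * phi a b c = 1" using False by simp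
            moreover have "inverse (a 0 * b 1 + a 1 * b 2) * (a 0 * b 1 + a 1 * b 2) = 1" using Lb by simp
            ultimately have "tensor_rank (MT (inverse (phi a b c)) a b c) \<le> 3" by (rule U3b[OF bc])
            then have "\<not> forbidden T13 (outer a b c)" unfolding forb_iff by blast
            then show ?thesis using False Lb Lc by simp
          qed
        next
          case False
          have "tensor_rank (MT 1 a b c) \<le> 3" by (rule U3a[OF Lb Lc False])
          then have "\<not> forbidden T13 (outer a b c)" unfolding forb_iff by blast
          then show ?thesis using False Lb Lc by simp
        qed
      qed
    qed
  qed
qed

end
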